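(* Let $q$ be a prime power, $s,\ell$ positive integers, $\alpha,\beta\in\mathbb{F}_q^*$, let $r$ be the multiplicative order of $\beta$, and assume $q\equiv 1\pmod{r\ell}$. Let $\omega\in\mathbb{F}_q$ be a primitive $r\ell$-th root of unity with $\omega^\ell=\beta$, and for $k=0,1,\dots,\ell-1$ let $$\eta_k(y)=\prod_{\substack{0\le j\le \ell-1\\ j\ne k}}\frac{y-\omega^{1+jr}}{\omega^{1+kr}-\omega^{1+jr}}\in\mathbb{F}_q[y].$$ Let $\mathcal{C}$ be an ideal of $\mathcal{R}=\mathbb{F}_q[x,y]/\langle x^s-\alpha,\,y^\ell-\beta\rangle$. For $j=0,\dots,\ell-1$ let $I_j=\{f(x)\in\mathbb{F}_q[x]/\langle x^s-\alpha\rangle:\ \eta_j(y)f(x)\in\mathcal{C}\}$ (an ideal of $\mathbb{F}_q[x]/\langle x^s-\alpha\rangle$), and let $p_j(x)$ be the unique monic divisor of $x^s-\alpha$ with $I_j=\langle p_j(x)\rangle$. Then $$\mathcal{C}=\big\langle \eta_0(y)p_0(x),\ \eta_1(y)p_1(x),\ \dots,\ \eta_{\ell-1}(y)p_{\ell-1}(x)\big\rangle .$$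
   Context: A two-dimensional $(\alpha,\beta)$-constacyclic code of length $s.\ell$ over $\mathbb{F}_q$ is identified with an ideal of $\mathcal{R}$: an $s\times\ell$ array $(c_{i,j})$ corresponds to $\sum_{i,j}c_{i,j}x^iy^j$. The polynomials $\eta_0,\dots,\eta_{\ell-1}$ are the primitive central idempotents of $\mathbb{F}_q[y]/\langle y^\ell-\beta\rangle$, where $y^\ell-\beta=\prod_{k=0}^{\ell-1}(y-\omega^{1+kr})$. *)

theory Defs
  imports "HOL-Computational_Algebra.Polynomial"
begin

text \<open>Bivariate polynomials F[x,y] are represented as 'a poly poly:
  the outer variable is y, the coefficients are polynomials in x.\<close>

definition is_ideal :: "'b::comm_ring_1 set \<Rightarrow> bool" where
  "is_ideal I \<longleftrightarrow> 0 \<in> I \<and> (\<forall>a\<in>I. \<forall>b\<in>I. a + b \<in> I) \<and> (\<forall>a\<in>I. \<forall>r. r * a \<in> I)"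

definition ideal_gen :: "'b::comm_ring_1 set \<Rightarrow> 'b set" where
  "ideal_gen S = \<Inter>{I. is_ideal I \<and> S \<subseteq> I}"

definition mult_ord :: "'a::field \<Rightarrow> nat" where
  "mult_ord b = (LEAST k. 0 < k \<and> b ^ k = 1)"

definition varX :: "'a::comm_ring_1 poly poly" where
  "varX = [:[:0, 1:]:]"

definition varY :: "'a::comm_ring_1 poly poly" where
  "varY = [:0, 1:]"

definition embX :: "'a::comm_ring_1 poly \<Rightarrow> 'a poly poly" where
  "embX f = [:f:]"

definition embY :: "'a::comm_ring_1 poly \<Rightarrow> 'a poly poly" where
  "embY g = map_poly (\<lambda>c. [:c:]) g"

definition eta :: "'a::field \<Rightarrow> nat \<Rightarrow> nat \<Rightarrow> nat \<Rightarrow> 'a poly" where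
  "eta \<omega> r l k = (\<Prod>j\<in>{0..<l} - {k}.
      smult (inverse (\<omega> ^ (1 + k * r) - \<omega> ^ (1 + j * r))) [:- (\<omega> ^ (1 + j * r)), 1:])"

end

theory Submission
  imports Defs
begin

definition E :: "(nat \<Rightarrow> 'a::field) \<Rightarrow> nat \<Rightarrow> nat \<Rightarrow> 'a poly" where
  "E \<mu> l j = (\<Prod>i\<in>{0..<l} - {j}. smult (inverse (\<mu> j - \<mu> i)) [:- (\<mu> i), 1:])"

lemma E_eval:
  assumes inj: "inj_on \<mu> {0..<l}" and j: "j < l" and k: "k < l"
  shows "poly (E \<mu> l j) (\<mu> k) = (if j = k then 1 else 0)"
proof (cases "j = k")
  case True
  have "poly (E \<mu> l j) (\<mu> k) = (\<Prod>i\<in>{0..<l} - {j}. 1)"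
    unfolding E_def poly_prod
  proof (rule prod.cong)
    fix i assume i: "i \<in> {0..<l} - {j}"
    then have "\<mu> k \<noteq> \<mu> i" using inj True k by (auto dest: inj_onD)
    then have ne: "\<mu> k - \<mu> i \<noteq> 0" by simp
    have "poly (smult (inverse (\<mu> j - \<mu> i)) [:- \<mu> i, 1:]) (\<mu> k) = inverse (\<mu> k - \<mu> i) * (\<mu> k - \<mu> i)"
      using True by (simp add: algebra_simps)
    then show "poly (smult (inverse (\<mu> j - \<mu> i)) [:- \<mu> i, 1:]) (\<mu> k) = 1"
      using ne by simp
  qed simp
  then show ?thesis using True by simp
next
  case False
  have "poly (E \<mu> l j) (\<mu> k) = 0"
    unfolding E_def poly_prod
    by (rule prod_zero) (use False k in auto)
  then show ?thesis using False by simp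
qed

lemma E_deg: "j < l \<Longrightarrow> degree (E \<mu> l j) \<le> l - 1"
proof -
  assume j: "j < l"
  have "degree (E \<mu> l j) \<le> (\<Sum>i\<in>{0..<l} - {j}. 1)"
    unfolding E_def
    by (rule order_trans[OF degree_prod_sum_le], simp, rule sum_mono)
       (simp add: degree_smult_le order_trans[OF degree_smult_le])
  also have "\<dots> \<le> l - 1"
    using j by (auto simp: card_Diff_singleton_if)
  finally show ?thesis .
qed

lemma roots_zero:
  fixes d :: "'a::field poly"
  assumes inj: "inj_on \<mu> {0..<l}" and deg: "degree d < l"
    and z: "\<forall>k<l. poly d (\<mu> k) = 0"
  shows "d = 0"
proof (rule ccontr)
  assume d: "d \<noteq> 0"
  have "\<mu> ` {0..<l} \<subseteq> {x. poly d x = 0}" using z by auto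
  then have "card (\<mu> ` {0..<l}) \<le> card {x. poly d x = 0}"
    using poly_roots_finite[OF d] by (rule card_mono[rotated])
  also have "\<dots> \<le> degree d" by (rule card_poly_roots_bound[OF d])
  finally show False using card_image[OF inj] deg by simp
qed

lemma E_sum:
  assumes inj: "inj_on \<mu> {0..<l}" and l: "l > 0"
  shows "(\<Sum>j\<in>{0..<l}. E \<mu> l j) = 1"
proof -
  let ?d = "(\<Sum>j\<in>{0..<l}. E \<mu> l j) - 1"
  have "degree ?d \<le> l - 1"
    by (rule order_trans[OF degree_diff_le]) (auto intro!: degree_sum_le E_deg)
  moreover have "\<forall>k<l. poly ?d (\<mu> k) = 0"
  proof (intro allI impI)
    fix k assume k: "k < l"
    have "poly ?d (\<mu> k) = (\<Sum>j\<in>{0..<l}. poly (E \<mu> l j) (\<mu> k)) - 1"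
      by (simp add: poly_sum)
    also have "\<dots> = (\<Sum>j\<in>{0..<l}. if j = k then 1 else 0) - 1"
      using E_eval[OF inj _ k] by (intro arg_cong2[where f=minus] sum.cong) auto
    finally have "poly ?d (\<mu> k) = (\<Sum>j\<in>{0..<l}. if j = k then 1 else 0) - 1" .
    then show "poly ?d (\<mu> k) = 0" using k by simp
  qed
  ultimately have "?d = 0" using roots_zero[OF inj, of ?d] l by fastforce
  then show ?thesis by simp
qed

lemma prod_smult_gen: "finite A \<Longrightarrow> (\<Prod>i\<in>A. smult (a i) (f i)) = smult (\<Prod>i\<in>A. a i) (\<Prod>i\<in>A. f i)"
  by (induct rule: finite_induct) (simp_all add: mult.commute)

lemma P_eq:
  fixes \<mu> :: "nat \<Rightarrow> 'a::field"
  assumes inj: "inj_on \<mu> {0..<l}" and l: "l > 0" and pw: "\<forall>i<l. \<mu> i ^ l = b"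
  shows "(\<Prod>i\<in>{0..<l}. [:- \<mu> i, 1:]) = monom 1 l - [:b:]"
proof -
  let ?P = "(\<Prod>i\<in>{0..<l}. [:- \<mu> i, 1:])" and ?Q = "monom 1 l - [:b:] :: 'a poly"
  have dP: "degree ?P = l"
    by (subst degree_prod_eq_sum_degree) auto
  have lP: "lead_coeff ?P = 1" by (simp add: lead_coeff_prod)
  have "degree (?P - ?Q) \<le> l - 1"
  proof (rule degree_le, intro allI impI)
    fix i assume i: "l - 1 < i"
    show "coeff (?P - ?Q) i = 0"
    proof (cases "i = l")
      case True then show ?thesis using lP dP l by (simp add: coeff_monom coeff_pCons split: nat.split)
    next
      case False then have "i > l" using i by simp
      then show ?thesis using dP by (simp add: coeff_monom coeff_eq_0)
    qed
  qed
  moreover have "\<forall>k<l. poly (?P - ?Q) (\<mu> k) = 0"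
  proof (intro allI impI)
    fix k assume k: "k < l"
    have "poly ?P (\<mu> k) = 0" unfolding poly_prod by (rule prod_zero) (use k in auto)
    moreover have "poly ?Q (\<mu> k) = 0" using pw k by (simp add: poly_monom)
    ultimately show "poly (?P - ?Q) (\<mu> k) = 0" by simp
  qed
  ultimately have "?P - ?Q = 0" using roots_zero[OF inj, of "?P - ?Q"] l by fastforce
  then show ?thesis by simp
qed

lemma E_mult:
  assumes j: "j < l"
  shows "E \<mu> l j * [:- \<mu> j, 1:] = smult (\<Prod>i\<in>{0..<l} - {j}. inverse (\<mu> j - \<mu> i)) (\<Prod>i\<in>{0..<l}. [:- \<mu> i, 1:])"
proof -
  have "(\<Prod>i\<in>{0..<l}. [:- \<mu> i, 1:]) = [:- \<mu> j, 1:] * (\<Prod>i\<in>{0..<l} - {j}. [:- \<mu> i, 1:])"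
    using j by (subst prod.remove[of _ j]) auto
  moreover have "E \<mu> l j = smult (\<Prod>i\<in>{0..<l} - {j}. inverse (\<mu> j - \<mu> i)) (\<Prod>i\<in>{0..<l} - {j}. [:- \<mu> i, 1:])"
    unfolding E_def by (rule prod_smult_gen) simp
  ultimately show ?thesis by (simp only: mult_smult_left mult_smult_right mult.commute)
qed
lemma embY_add: "embY (p + q) = embY p + embY q"
  by (rule poly_eqI) (simp add: embY_def coeff_map_poly)

lemma embY_const: "embY [:c:] = [:[:c:]:]"
  by (simp add: embY_def map_poly_pCons)

lemma embY_lin: "embY [:- c, 1:] = [:- [:c:], 1:]"
  by (simp add: embY_def map_poly_pCons)

lemma embY_mult: "embY (p * q) = embY p * embY q"
proof (induction p)
  case 0 then show ?case by (simp add: embY_def)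
next
  case (pCons a p)
  have sm: "embY (smult a q) = smult [:a:] (embY q)"
    by (rule poly_eqI) (simp add: embY_def coeff_map_poly)
  have "embY (pCons a p * q) = embY (smult a q) + embY (pCons 0 (p * q))"
    by (simp add: embY_add)
  also have "embY (pCons 0 (p * q)) = pCons 0 (embY p * embY q)"
    using pCons.IH by (simp add: embY_def map_poly_pCons)
  also have "embY (pCons a p) = pCons [:a:] (embY p)"
    by (simp add: embY_def map_poly_pCons)
  ultimately show ?case using sm by simp
qed

lemma embY_1: "embY 1 = 1"
  by (simp add: embY_def)

lemma embY_sum: "embY (sum f A) = (\<Sum>x\<in>A. embY (f x))"
  by (induct A rule: infinite_finite_induct) (auto simp: embY_add[unfolded embY_def] embY_def)

lemma embY_power: "embY (p ^ n) = embY p ^ n"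
  by (induct n) (auto simp: embY_mult embY_1)

lemma embY_smult: "embY (smult c p) = [:[:c:]:] * embY p"
  by (metis embY_const embY_mult smult_one smult_smult mult_smult_left mult_1_right mult_1_left)

lemma ideal_diff: "is_ideal I \<Longrightarrow> a \<in> I \<Longrightarrow> b \<in> I \<Longrightarrow> a - b \<in> I"
  unfolding is_ideal_def by (metis diff_conv_add_uminus mult_minus1)

lemma ideal_mult: "is_ideal I \<Longrightarrow> a \<in> I \<Longrightarrow> r * a \<in> I"
  unfolding is_ideal_def by blast

lemma ideal_sum:
  assumes I: "is_ideal I" and A: "finite A"
  shows "(\<forall>x\<in>A. f x \<in> I) \<longrightarrow> sum f A \<in> I"
  using A by (induct A rule: finite_induct) (use I in \<open>auto simp: is_ideal_def\<close>)
lemma embY_diff: "embY (p - q) = embY p - embY q"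
  by (metis add_diff_cancel embY_add diff_add_cancel)

lemma embY_monom: "embY (monom 1 n) = varY ^ n"
proof -
  have "embY [:0, 1::'a:] = varY" by (simp add: embY_def varY_def map_poly_pCons)
  moreover have "monom 1 n = ([:0, 1:] ^ n :: 'a::comm_ring_1 poly)" by (simp add: monom_altdef)
  ultimately show ?thesis by (simp add: embY_power)
qed

theorem theorem1:
  fixes \<alpha> \<beta> \<omega> :: "'a::{finite,field}"
    and s l r :: nat
    and C :: "'a poly poly set"
    and p :: "nat \<Rightarrow> 'a poly"
  assumes "s > 0" and "l > 0"
    and "\<alpha> \<noteq> 0" and "\<beta> \<noteq> 0"
    and "r = mult_ord \<beta>"
    and "(r * l) dvd (card (UNIV :: 'a set) - 1)"
    and "\<omega> ^ (r * l) = 1" and "\<forall>k. 0 < k \<and> k < r * l \<longrightarrow> \<omega> ^ k \<noteq> 1"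
    and "\<omega> ^ l = \<beta>"
    and "is_ideal C"
    and "varX ^ s - [:[:\<alpha>:]:] \<in> C" and "varY ^ l - [:[:\<beta>:]:] \<in> C"
    and "\<forall>j<l. lead_coeff (p j) = 1 \<and> p j dvd (monom 1 s - [:\<alpha>:]) \<and>
           {f. embY (eta \<omega> r l j) * embX f \<in> C} = {g. p j dvd g}"
  shows "C = ideal_gen ((\<lambda>j. embY (eta \<omega> r l j) * embX (p j)) ` {0..<l}
                        \<union> {varX ^ s - [:[:\<alpha>:]:], varY ^ l - [:[:\<beta>:]:]})"
proof -
  note l = assms(2)
  define \<mu> where "\<mu> i = \<omega> ^ (1 + i * r)" for i
  define G where "G = ((\<lambda>j. embY (eta \<omega> r l j) * embX (p j)) ` {0..<l}
                        \<union> {varX ^ s - [:[:\<alpha>:]:], varY ^ l - [:[:\<beta>:]:]})"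
  define M :: "'a poly poly" where "M = varY ^ l - [:[:\<beta>:]:]"
  have "card {0, 1::'a} \<le> card (UNIV :: 'a set)"
    by (rule card_mono) auto
  then have card2: "2 \<le> card (UNIV :: 'a set)" by simp
  have "r * l \<noteq> 0"
  proof
    assume "r * l = 0"
    then have "card (UNIV :: 'a set) - 1 = 0" using assms(6) by (metis dvd_0_left_iff)
    then show False using card2 by simp
  qed
  then have r: "r > 0" by simp
  have w0: "\<omega> \<noteq> 0" using assms(9) assms(4) l by auto
  have inj: "inj_on \<mu> {0..<l}"
  proof -
    have *: False if ik: "i < k" "k < l" and eq: "\<mu> i = \<mu> k" for i k
    proof -
      have "\<mu> k = \<mu> i * \<omega> ^ ((k - i) * r)"
        using ik unfolding \<mu>_def by (simp add: power_add[symmetric] algebra_simps diff_mult_distrib)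
      moreover have "\<mu> i \<noteq> 0" using w0 unfolding \<mu>_def by simp
      ultimately have "\<omega> ^ ((k - i) * r) = 1" using eq by simp
      moreover have "0 < (k - i) * r" using ik r by simp
      moreover have "(k - i) * r < r * l"
        using ik r by (simp add: mult.commute)
      ultimately show False using assms(8) by blast
    qed
    show ?thesis
      by (rule inj_onI) (metis * atLeastLessThan_iff linorder_neqE_nat)
  qed
  have pw: "\<forall>i<l. \<mu> i ^ l = \<beta>"
  proof (intro allI impI)
    fix i
    have "\<mu> i ^ l = \<omega> ^ l * (\<omega> ^ (r * l)) ^ i"
      unfolding \<mu>_def by (simp add: power_mult[symmetric] power_add[symmetric] algebra_simps)
    then show "\<mu> i ^ l = \<beta>" using assms(7,9) by simp
  qed
  have etaE: "eta \<omega> r l j = E \<mu> l j" for j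
    by (simp add: eta_def E_def \<mu>_def)
  have MC: "M \<in> C" using assms(12) M_def by simp
  have genC: "embY (eta \<omega> r l j) * embX (p j) \<in> C" if "j < l" for j
  proof -
    have "{f. embY (eta \<omega> r l j) * embX f \<in> C} = {g. p j dvd g}" using assms(13) that by simp
    then show ?thesis by (metis (mono_tags) dvd_refl mem_Collect_eq)
  qed
  have sub1: "ideal_gen G \<subseteq> C"
    unfolding ideal_gen_def
    by (rule Inter_lower) (use assms(10,11,12) genC in \<open>auto simp: G_def\<close>)
  have sub2: "c \<in> ideal_gen G" if c: "c \<in> C" for c
    unfolding ideal_gen_def
  proof (rule InterI)
    fix I assume "I \<in> {I. is_ideal I \<and> G \<subseteq> I}"
    then have I: "is_ideal I" and GI: "G \<subseteq> I" by auto
    have MI: "M \<in> I" using GI unfolding G_def M_def by auto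
    have key: "embY (E \<mu> l j) * c \<in> I" if j: "j < l" for j
    proof -
      define a where "a = [:\<mu> j:]"
      define f where "f = poly c a"
      define cc where "cc = (\<Prod>i\<in>{0..<l} - {j}. inverse (\<mu> j - \<mu> i))"
      have "poly (c - [:f:]) a = 0" by (simp add: f_def)
      then obtain q where q: "c - [:f:] = [:- a, 1:] * q"
        unfolding poly_eq_0_iff_dvd by (elim dvdE)
      have YL: "embY (E \<mu> l j) * [:- a, 1:] = [:[:cc:]:] * M"
      proof -
        have "embY (E \<mu> l j) * [:- a, 1:] = embY (E \<mu> l j * [:- \<mu> j, 1:])"
          by (simp only: embY_mult embY_lin a_def)
        also have "\<dots> = embY (smult cc (monom 1 l - [:\<beta>:]))"
          using E_mult[OF j, of \<mu>] P_eq[OF inj l pw] by (simp add: cc_def)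
        also have "\<dots> = [:[:cc:]:] * M"
          by (simp add: embY_smult embY_diff embY_monom embY_const M_def)
        finally show ?thesis .
      qed
      have eq: "embY (E \<mu> l j) * c = embY (E \<mu> l j) * embX f + ([:[:cc:]:] * q) * M"
      proof -
        have "c = [:f:] + [:- a, 1:] * q" using q by (simp add: algebra_simps)
        then have "embY (E \<mu> l j) * c = embY (E \<mu> l j) * [:f:] + (embY (E \<mu> l j) * [:- a, 1:]) * q"
          by (metis distrib_left mult.assoc)
        then show ?thesis using YL by (simp add: embX_def mult_ac)
      qed
      have "embY (E \<mu> l j) * embX f \<in> C"
      proof -
        have "embY (E \<mu> l j) * embX f = embY (E \<mu> l j) * c - ([:[:cc:]:] * q) * M"
          using eq by simp
        moreover have "embY (E \<mu> l j) * c \<in> C" using ideal_mult[OF assms(10) c] .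
        moreover have "([:[:cc:]:] * q) * M \<in> C" using ideal_mult[OF assms(10) MC] .
        ultimately show ?thesis using ideal_diff[OF assms(10)] by simp
      qed
      moreover have "{f. embY (E \<mu> l j) * embX f \<in> C} = {g. p j dvd g}" using assms(13) j by (simp add: etaE)
      ultimately have "p j dvd f" by blast
      then obtain g where g: "f = p j * g" by (elim dvdE)
      have "embY (E \<mu> l j) * embX f = embX g * (embY (E \<mu> l j) * embX (p j))"
        using g by (simp add: embX_def mult_ac)
      moreover have "embY (E \<mu> l j) * embX (p j) \<in> I"
        using GI j unfolding G_def etaE by auto
      ultimately have "embY (E \<mu> l j) * embX f \<in> I" using ideal_mult[OF I] by metis
      moreover have "([:[:cc:]:] * q) * M \<in> I" using ideal_mult[OF I MI] .
      ultimately show ?thesis using eq I unfolding is_ideal_def by simp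
    qed
    have "c = embY (\<Sum>j\<in>{0..<l}. E \<mu> l j) * c"
      using E_sum[OF inj l] by (simp add: embY_1)
    also have "\<dots> = (\<Sum>j\<in>{0..<l}. embY (E \<mu> l j) * c)"
      by (simp add: embY_sum sum_distrib_right)
    finally show "c \<in> I" using ideal_sum[OF I, of "{0..<l}" "\<lambda>j. embY (E \<mu> l j) * c"] key by simp
  qed
  show ?thesis using sub1 sub2 unfolding G_def by blast
qed

end
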